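(* Consider the stochastic quadratic problem in the context, and let $\eta_0,\dots,\eta_T$ be any deterministic learning rates. Run SGD $w_{t+1}=w_t-\eta_t(H(\xi_t)w_t-b(\xi_t))$ for $t=0,\dots,T$ from a deterministic $w_0$. Assume $\mathbb{E}_\xi[n_tn_t^\top]\preceq\sigma^2H$ for all $t$, and let $P_t=I-\eta_tH$. Let $\lambda_1,\dots,\lambda_d$ be the eigenvalues of $H$. Then $$\sum_{\tau=0}^T\mathbb{E}\left[\eta_\tau^2\,n_\tau^\top P_T\cdots P_{\tau+1}HP_{\tau+1}\cdots P_T\,n_\tau\right]\le\sigma^2\sum_{j=1}^d\lambda_j^2\sum_{k=0}^T\eta_k^2\prod_{i=k+1}^T(1-\eta_i\lambda_j)^2 .$$
   Context: Let $\xi$ be a random data sample, $H(\xi)\in\mathbb{R}^{d\times d}$ a random symmetric matrix and $b(\xi)\in\mathbb{R}^d$ a random vector. Define $f(w,\xi)=\frac12w^\top H(\xi)w-b(\xi)^\top w$. Set $H=\mathbb{E}H(\xi)$, assumed positive definite, and $b=\mathbb{E}b(\xi)$, with $w_*=H^{-1}b$. The samples $\xi_t$ are i.i.d. copies of $\xi$, and $n_t=(Hw_t-b)-(H(\xi_t)w_t-b(\xi_t))$. *)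

theory Defs
  imports "HOL-Probability.Probability" "Jordan_Normal_Form.Char_Poly"
begin

unbundle no vec_syntax
unbundle no inner_syntax
no_notation Finite_Cartesian_Product.matrix_vector_mult (infixl \<open>*v\<close> 70)

definition loewner_le :: "nat \<Rightarrow> real mat \<Rightarrow> real mat \<Rightarrow> bool" where
  "loewner_le d A B \<longleftrightarrow> (\<forall>x \<in> carrier_vec d. x \<bullet> ((B - A) *\<^sub>v x) \<ge> 0)"

definition pos_def_mat :: "nat \<Rightarrow> real mat \<Rightarrow> bool" where
  "pos_def_mat d A \<longleftrightarrow> A \<in> carrier_mat d d \<and> A\<^sup>T = A \<and>
     (\<forall>x \<in> carrier_vec d. x \<noteq> 0\<^sub>v d \<longrightarrow> x \<bullet> (A *\<^sub>v x) > 0)"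

fun mprod :: "nat \<Rightarrow> real mat list \<Rightarrow> real mat" where
  "mprod d [] = 1\<^sub>m d"
| "mprod d (A # As) = A * mprod d As"

primrec sgd :: "real vec \<Rightarrow> (nat \<Rightarrow> real) \<Rightarrow> ('s \<Rightarrow> real mat) \<Rightarrow> ('s \<Rightarrow> real vec)
    \<Rightarrow> (nat \<Rightarrow> 'a \<Rightarrow> 's) \<Rightarrow> nat \<Rightarrow> 'a \<Rightarrow> real vec" where
  "sgd w0 \<eta> Hs bs \<xi> 0 \<omega> = w0"
| "sgd w0 \<eta> Hs bs \<xi> (Suc t) \<omega> =
     sgd w0 \<eta> Hs bs \<xi> t \<omega> - \<eta> t \<cdot>\<^sub>v (Hs (\<xi> t \<omega>) *\<^sub>v sgd w0 \<eta> Hs bs \<xi> t \<omega> - bs (\<xi> t \<omega>))"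

definition noise :: "real mat \<Rightarrow> real vec \<Rightarrow> real vec \<Rightarrow> (nat \<Rightarrow> real) \<Rightarrow> ('s \<Rightarrow> real mat)
    \<Rightarrow> ('s \<Rightarrow> real vec) \<Rightarrow> (nat \<Rightarrow> 'a \<Rightarrow> 's) \<Rightarrow> nat \<Rightarrow> 'a \<Rightarrow> real vec" where
  "noise H b w0 \<eta> Hs bs \<xi> t \<omega> =
     (H *\<^sub>v sgd w0 \<eta> Hs bs \<xi> t \<omega> - b) - (Hs (\<xi> t \<omega>) *\<^sub>v sgd w0 \<eta> Hs bs \<xi> t \<omega> - bs (\<xi> t \<omega>))"

definition Pmat :: "nat \<Rightarrow> real mat \<Rightarrow> (nat \<Rightarrow> real) \<Rightarrow> nat \<Rightarrow> real mat" where
  "Pmat d H \<eta> t = 1\<^sub>m d - \<eta> t \<cdot>\<^sub>m H"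

end

theory Submission
  imports Defs "Jordan_Normal_Form.Schur_Decomposition"
begin


definition qf :: "nat \<Rightarrow> (nat \<Rightarrow> nat \<Rightarrow> real) \<Rightarrow> (nat \<Rightarrow> real) \<Rightarrow> (nat \<Rightarrow> real) \<Rightarrow> real" where
  "qf n a x y = (\<Sum>i<n. \<Sum>j<n. x i * a i j * y j)"

lemma delta_l[simp]: "(j::nat) < n \<Longrightarrow> (\<Sum>i<n. (if i = j then 1 else 0) * f i) = (f j::real)"
proof -
  assume j: "j < n"
  have "(\<Sum>i<n. (if i = j then 1 else 0) * f i) = (\<Sum>i<n. if i = j then f j else 0)" by (rule sum.cong) auto
  then show ?thesis using j by simp
qed

lemma delta_r[simp]: "(j::nat) < n \<Longrightarrow> (\<Sum>i<n. f i * (if i = j then 1 else 0)) = (f j::real)"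
proof -
  assume j: "j < n"
  have "(\<Sum>i<n. f i * (if i = j then 1 else 0)) = (\<Sum>i<n. if i = j then f j else 0)" by (rule sum.cong) auto
  then show ?thesis using j by simp
qed

lemma qf_expand:
  assumes sym: "\<And>i j. i < n \<Longrightarrow> j < n \<Longrightarrow> a i j = a j i"
  shows "qf n a (\<lambda>i. x i + t * y i) (\<lambda>i. x i + t * y i) = qf n a x x + 2 * t * qf n a x y + t\<^sup>2 * qf n a y y"
proof -
  have swap: "qf n a y x = qf n a x y"
    unfolding qf_def by (subst sum.swap) (auto intro!: sum.cong simp: sym)
  have "qf n a (\<lambda>i. x i + t * y i) (\<lambda>i. x i + t * y i) = qf n a x x + t * qf n a x y + t * qf n a y x + t\<^sup>2 * qf n a y y"
    unfolding qf_def by (simp add: algebra_simps sum.distrib sum_distrib_left power2_eq_square)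
  then show ?thesis using swap by simp
qed

lemma qf_unit_right: "k < n \<Longrightarrow> qf n a x (\<lambda>j. if j = k then 1 else 0) = (\<Sum>i<n. x i * a i k)"
  unfolding qf_def by (simp add: if_distrib cong: if_cong)

lemma qf_unit_left: "k < n \<Longrightarrow> qf n a (\<lambda>j. if j = k then 1 else 0) y = (\<Sum>j<n. a k j * y j)"
proof -
  assume k: "k < n"
  have "\<And>i. (\<Sum>j<n. (if i = k then 1 else 0) * a i j * y j) = (if i = k then (\<Sum>j<n. a k j * y j) else 0)"
    by auto
  then show ?thesis unfolding qf_def using k by simp
qed

lemma qf_unit_unit: "k < n \<Longrightarrow> qf n a (\<lambda>j. if j = k then 1 else 0) (\<lambda>j. if j = k then 1 else 0) = a k k"
  by (simp add: qf_unit_left del: delta_l delta_r) (simp)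

lemma qf_zero_bilin:
  assumes sym: "\<And>i j. i < n \<Longrightarrow> j < n \<Longrightarrow> a i j = a j i"
    and psd: "\<And>x. qf n a x x \<ge> 0"
    and y0: "qf n a y y = 0"
  shows "qf n a x y = 0"
proof (rule ccontr)
  assume B: "qf n a x y \<noteq> 0"
  define t where "t = - (qf n a x x + 1) / (2 * qf n a x y)"
  have "qf n a (\<lambda>i. x i + t * y i) (\<lambda>i. x i + t * y i) = qf n a x x + 2 * t * qf n a x y"
    using qf_expand[OF sym, where x=x and t=t and y=y] y0 by simp
  also have "\<dots> = -1" using B unfolding t_def by (simp add: field_simps)
  finally show False using psd[of "\<lambda>i. x i + t * y i"] by simp
qed

definition supp_from :: "nat \<Rightarrow> nat \<Rightarrow> (nat \<Rightarrow> nat \<Rightarrow> real) \<Rightarrow> bool" where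
  "supp_from n k a \<longleftrightarrow> (\<forall>i j. i < n \<longrightarrow> j < n \<longrightarrow> (i < k \<or> j < k) \<longrightarrow> a i j = 0)"

lemma psd_trace_aux:
  fixes D :: "nat \<Rightarrow> nat \<Rightarrow> real"
  assumes psdD: "\<And>x. qf n D x x \<ge> 0"
    and kn: "k \<le> n"
  shows "\<forall>a. (\<forall>i j. i < n \<longrightarrow> j < n \<longrightarrow> a i j = a j i) \<longrightarrow> (\<forall>x. qf n a x x \<ge> 0)
           \<longrightarrow> supp_from n k a \<longrightarrow> (\<Sum>i<n. \<Sum>j<n. a i j * D i j) \<ge> 0"
  using kn
proof (induction k rule: inc_induct)
  case base
  show ?case
  proof (intro allI impI)
    fix a :: "nat \<Rightarrow> nat \<Rightarrow> real" assume "supp_from n n a"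
    then have "\<And>i j. i < n \<Longrightarrow> j < n \<Longrightarrow> a i j = 0" unfolding supp_from_def by blast
    then show "(\<Sum>i<n. \<Sum>j<n. a i j * D i j) \<ge> 0" by simp
  qed
next
  case (step k)
  show ?case
  proof (intro allI impI)
    fix a :: "nat \<Rightarrow> nat \<Rightarrow> real"
    assume sym: "\<forall>i j. i < n \<longrightarrow> j < n \<longrightarrow> a i j = a j i"
      and psd: "\<forall>x. qf n a x x \<ge> 0" and sk: "supp_from n k a"
    have sym': "\<And>i j. i < n \<Longrightarrow> j < n \<Longrightarrow> a i j = a j i" using sym by blast
    have psd': "\<And>x. qf n a x x \<ge> 0" using psd by blast
    have kn: "k < n" using step by simp
    define e where "e = (\<lambda>j::nat. if j = k then (1::real) else 0)"
    define c where "c = a k k"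
    have c_eq: "qf n a e e = c" unfolding e_def c_def using qf_unit_unit[OF kn] .
    have c0: "c \<ge> 0" using psd' c_eq by metis
    show "(\<Sum>i<n. \<Sum>j<n. a i j * D i j) \<ge> 0"
    proof (cases "c = 0")
      case True
      have z: "a j k = 0" if j: "j < n" for j
      proof -
        have "qf n a (\<lambda>i. if i = j then 1 else 0) e = 0"
          using qf_zero_bilin[OF sym' psd'] c_eq True by simp
        then show ?thesis unfolding e_def using qf_unit_right[OF kn] qf_unit_left[OF j] j by simp
      qed
      have "supp_from n (Suc k) a"
        unfolding supp_from_def
      proof (intro allI impI)
        fix i j assume i: "i < n" and j: "j < n" and ij: "i < Suc k \<or> j < Suc k"
        show "a i j = 0"
        proof (cases "i < k \<or> j < k")
          case True then show ?thesis using sk i j unfolding supp_from_def by blast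
        next
          case False
          then have "i = k \<or> j = k" using ij by auto
          then show ?thesis using z i j sym' by auto
        qed
      qed
      then show ?thesis using step.IH sym psd by blast
    next
      case False
      then have cpos: "c > 0" using c0 by simp
      define a' where "a' = (\<lambda>i j. a i j - a i k * a k j / c)"
      have sym2: "\<forall>i j. i < n \<longrightarrow> j < n \<longrightarrow> a' i j = a' j i"
        unfolding a'_def using sym' kn by (auto simp: mult.commute)
      have psd2: "\<forall>x. qf n a' x x \<ge> 0"
      proof
        fix x
        define s where "s = (\<Sum>i<n. x i * a i k)"
        have s2: "(\<Sum>j<n. a k j * x j) = s" unfolding s_def
          by (rule sum.cong) (use sym' kn in \<open>auto simp: mult.commute\<close>)
        have "qf n a' x x = qf n a x x - (\<Sum>i<n. \<Sum>j<n. (x i * a i k) * (a k j * x j)) / c"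
          unfolding qf_def a'_def
          by (simp add: algebra_simps sum_subtractf sum_divide_distrib)
        also have "(\<Sum>i<n. \<Sum>j<n. (x i * a i k) * (a k j * x j)) = (\<Sum>i<n. x i * a i k) * (\<Sum>j<n. a k j * x j)"
          by (simp add: sum_product)
        also have "\<dots> = s * s" using s2 s_def by simp
        finally have q1: "qf n a' x x = qf n a x x - s * s / c" .
        have "qf n a (\<lambda>i. x i + (- s / c) * e i) (\<lambda>i. x i + (- s / c) * e i)
              = qf n a x x + 2 * (- s / c) * s + (- s / c)\<^sup>2 * c"
          using qf_expand[OF sym', where x=x and t="- s / c" and y=e] c_eq qf_unit_right[OF kn, of a x]
          unfolding e_def s_def by simp
        also have "\<dots> = qf n a x x - s * s / c" using cpos by (simp add: field_simps power2_eq_square)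
        finally show "qf n a' x x \<ge> 0" using q1 psd' by metis
      qed
      have supp2: "supp_from n (Suc k) a'"
        unfolding supp_from_def
      proof (intro allI impI)
        fix i j assume i: "i < n" and j: "j < n" and ij: "i < Suc k \<or> j < Suc k"
        have sk': "\<And>i j. i < n \<Longrightarrow> j < n \<Longrightarrow> i < k \<or> j < k \<Longrightarrow> a i j = 0"
          using sk unfolding supp_from_def by blast
        show "a' i j = 0"
        proof (cases "i < k \<or> j < k")
          case True then show ?thesis using sk'[OF i j] sk'[OF i kn] sk'[OF kn j] unfolding a'_def by auto
        next
          case False
          then have "i = k \<or> j = k" using ij by auto
          then show ?thesis using cpos unfolding a'_def c_def by auto
        qed
      qed
      have IH: "(\<Sum>i<n. \<Sum>j<n. a' i j * D i j) \<ge> 0" using step.IH sym2 psd2 supp2 by blast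
      define v where "v = (\<lambda>i. a i k)"
      have "(\<Sum>i<n. \<Sum>j<n. a i j * D i j) = (\<Sum>i<n. \<Sum>j<n. a' i j * D i j) + (\<Sum>i<n. \<Sum>j<n. a i k * a k j * D i j) / c"
        unfolding a'_def by (simp add: algebra_simps sum_subtractf sum_divide_distrib sum.distrib)
      also have "(\<Sum>i<n. \<Sum>j<n. a i k * a k j * D i j) = qf n D v v"
        unfolding qf_def v_def
        by (intro sum.cong refl) (use sym' kn in \<open>auto simp: mult.commute mult.left_commute\<close>)
      finally show ?thesis using IH psdD[of v] cpos by simp
    qed
  qed
qed

lemma psd_trace:
  fixes D a :: "nat \<Rightarrow> nat \<Rightarrow> real"
  assumes psdD: "\<And>x. qf n D x x \<ge> 0"
    and sym: "\<And>i j. i < n \<Longrightarrow> j < n \<Longrightarrow> a i j = a j i"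
    and psdA: "\<And>x. qf n a x x \<ge> 0"
  shows "(\<Sum>i<n. \<Sum>j<n. a i j * D i j) \<ge> 0"
  using psd_trace_aux[OF psdD, of 0] sym psdA unfolding supp_from_def by auto



lemma quad_form:
  assumes x: "x \<in> carrier_vec n" and A: "A \<in> carrier_mat n n"
  shows "x \<bullet> (A *\<^sub>v x) = (\<Sum>i<n. \<Sum>j<n. x $ i * A $$ (i, j) * x $ j)"
  using x A by (auto simp: scalar_prod_def atLeast0LessThan sum_distrib_left mult.assoc intro!: sum.cong)

lemma mprod_carrier: "set L \<subseteq> carrier_mat d d \<Longrightarrow> mprod d L \<in> carrier_mat d d"
  by (induct L) auto

lemma mprod_append:
  "set xs \<subseteq> carrier_mat d d \<Longrightarrow> set ys \<subseteq> carrier_mat d d \<Longrightarrow> mprod d (xs @ ys) = mprod d xs * mprod d ys"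
proof (induct xs)
  case Nil
  then show ?case using mprod_carrier[of ys d] by (simp add: left_mult_one_mat)
next
  case (Cons A xs)
  then have A: "A \<in> carrier_mat d d" and xs: "set xs \<subseteq> carrier_mat d d" by auto
  have "mprod d ((A # xs) @ ys) = A * (mprod d xs * mprod d ys)" using Cons xs by simp
  also have "\<dots> = (A * mprod d xs) * mprod d ys"
    using A mprod_carrier[OF xs] mprod_carrier[OF Cons(3)] by simp
  finally show ?case by simp
qed

lemma mprod_transpose:
  "set L \<subseteq> carrier_mat d d \<Longrightarrow> transpose_mat (mprod d L) = mprod d (rev (map transpose_mat L))"
proof (induct L)
  case Nil
  then show ?case by simp
next
  case (Cons A xs)
  then have A: "A \<in> carrier_mat d d" and xs: "set xs \<subseteq> carrier_mat d d" by auto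
  have c: "set (rev (map transpose_mat xs)) \<subseteq> carrier_mat d d" using xs by auto
  have "transpose_mat (mprod d (A # xs)) = transpose_mat (mprod d xs) * transpose_mat A"
    using transpose_mult[OF A mprod_carrier[OF xs]] by simp
  also have "\<dots> = mprod d (rev (map transpose_mat xs)) * mprod d [transpose_mat A]"
    using Cons xs A by (simp add: right_mult_one_mat)
  also have "\<dots> = mprod d (rev (map transpose_mat (A # xs)))"
    using mprod_append[OF c, of "[transpose_mat A]"] A by simp
  finally show ?case .
qed

definition mtr :: "nat \<Rightarrow> real mat \<Rightarrow> real" where
  "mtr d X = (\<Sum>i<d. X $$ (i, i))"

lemma mult_entry:
  assumes "X \<in> carrier_mat d d" "Y \<in> carrier_mat d d" "i < d" "j < d"
  shows "(X * Y) $$ (i, j) = (\<Sum>k<d. X $$ (i, k) * Y $$ (k, j))"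
  using assms by (auto simp: scalar_prod_def atLeast0LessThan intro!: sum.cong)

lemma mtr_comm:
  assumes X: "X \<in> carrier_mat d d" and Y: "Y \<in> carrier_mat d d"
  shows "mtr d (X * Y) = mtr d (Y * X)"
proof -
  have "mtr d (X * Y) = (\<Sum>i<d. \<Sum>k<d. X $$ (i, k) * Y $$ (k, i))"
    unfolding mtr_def using mult_entry[OF X Y] by simp
  also have "\<dots> = (\<Sum>k<d. \<Sum>i<d. Y $$ (k, i) * X $$ (i, k))"
    by (subst sum.swap) (simp add: mult.commute)
  also have "\<dots> = mtr d (Y * X)"
    unfolding mtr_def using mult_entry[OF Y X] by simp
  finally show ?thesis .
qed

lemma ut_mult:
  assumes U: "U \<in> carrier_mat d d" and V: "V \<in> carrier_mat d d"
    and uU: "upper_triangular U" and uV: "upper_triangular V"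
  shows "upper_triangular (U * V) \<and> (\<forall>j<d. (U * V) $$ (j, j) = U $$ (j, j) * V $$ (j, j))"
proof
  show "upper_triangular (U * V)"
  proof (rule upper_triangularI)
    fix i j assume ji: "j < i" and i: "i < dim_row (U * V)"
    then have i': "i < d" and j': "j < d" using U by auto
    have "(U * V) $$ (i, j) = (\<Sum>k<d. U $$ (i, k) * V $$ (k, j))" using mult_entry[OF U V i' j'] .
    also have "\<dots> = 0"
    proof (rule sum.neutral, rule ballI)
      fix k assume k: "k \<in> {..<d}"
      show "U $$ (i, k) * V $$ (k, j) = 0"
      proof (cases "k < i")
        case True then show ?thesis using upper_triangularD[OF uU True] i' U by simp
      next
        case False then have jk: "j < k" using ji by simp
        then show ?thesis using upper_triangularD[OF uV jk] k V by simp
      qed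
    qed
    finally show "(U * V) $$ (i, j) = 0" .
  qed
  show "\<forall>j<d. (U * V) $$ (j, j) = U $$ (j, j) * V $$ (j, j)"
  proof (intro allI impI)
    fix j assume j: "j < d"
    have "(U * V) $$ (j, j) = (\<Sum>k<d. U $$ (j, k) * V $$ (k, j))" using mult_entry[OF U V j j] .
    also have "\<dots> = (\<Sum>k<d. if k = j then U $$ (j, j) * V $$ (j, j) else 0)"
    proof (rule sum.cong[OF refl])
      fix k assume k: "k \<in> {..<d}"
      show "U $$ (j, k) * V $$ (k, j) = (if k = j then U $$ (j, j) * V $$ (j, j) else 0)"
      proof (cases "k < j")
        case True then show ?thesis using upper_triangularD[OF uU True] j U by simp
      next
        case False
        show ?thesis
        proof (cases "k = j")
          case False
          with \<open>\<not> k < j\<close> have jk: "j < k" by simp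
          then show ?thesis using upper_triangularD[OF uV jk] k V by simp
        qed simp
      qed
    qed
    also have "\<dots> = U $$ (j, j) * V $$ (j, j)" using j by simp
    finally show "(U * V) $$ (j, j) = U $$ (j, j) * V $$ (j, j)" .
  qed
qed

lemma ut_mprod:
  assumes "set L \<subseteq> carrier_mat d d" "\<And>U. U \<in> set L \<Longrightarrow> upper_triangular U"
  shows "upper_triangular (mprod d L) \<and> (\<forall>j<d. mprod d L $$ (j, j) = prod_list (map (\<lambda>U. U $$ (j, j)) L))"
  using assms
proof (induct L)
  case Nil
  then show ?case by auto
next
  case (Cons A xs)
  then have A: "A \<in> carrier_mat d d" and xs: "set xs \<subseteq> carrier_mat d d" and uA: "upper_triangular A" by auto
  have IH: "upper_triangular (mprod d xs) \<and> (\<forall>j<d. mprod d xs $$ (j, j) = prod_list (map (\<lambda>U. U $$ (j, j)) xs))"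
    using Cons by auto
  show ?case using ut_mult[OF A mprod_carrier[OF xs] uA] IH by auto
qed

lemma conj_mult:
  fixes P Q :: "real mat"
  assumes P: "P \<in> carrier_mat d d" and Q: "Q \<in> carrier_mat d d" and PQ: "P * Q = 1\<^sub>m d"
    and X: "X \<in> carrier_mat d d" and Y: "Y \<in> carrier_mat d d"
  shows "Q * (X * Y) * P = (Q * X * P) * (Q * Y * P)"
proof -
  have YP: "Y * P \<in> carrier_mat d d" using Y P by simp
  have c1: "P * (Q * (Y * P)) = Y * P"
  proof -
    have "P * (Q * (Y * P)) = (P * Q) * (Y * P)" by (rule assoc_mult_mat[symmetric, OF P Q YP])
    then show ?thesis using PQ left_mult_one_mat[OF YP] by simp
  qed
  have "(Q * X * P) * (Q * Y * P) = Q * (X * (P * (Q * (Y * P))))"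
    using P Q X Y by (simp add: assoc_mult_mat[of _ d d _ d _ d])
  also have "\<dots> = Q * (X * Y) * P"
    unfolding c1 using P Q X Y by (simp add: assoc_mult_mat[of _ d d _ d _ d])
  finally show ?thesis by simp
qed

lemma conj_mprod:
  fixes P Q :: "real mat"
  assumes P: "P \<in> carrier_mat d d" and Q: "Q \<in> carrier_mat d d" and PQ: "P * Q = 1\<^sub>m d" and QP: "Q * P = 1\<^sub>m d"
  shows "set L \<subseteq> carrier_mat d d \<Longrightarrow> Q * mprod d L * P = mprod d (map (\<lambda>X. Q * X * P) L)"
proof (induct L)
  case Nil
  then show ?case using Q QP by (simp add: right_mult_one_mat)
next
  case (Cons A xs)
  then have A: "A \<in> carrier_mat d d" and xs: "set xs \<subseteq> carrier_mat d d" by auto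
  show ?case using conj_mult[OF P Q PQ A mprod_carrier[OF xs]] Cons xs by simp
qed

lemma mtr_conj:
  fixes P Q :: "real mat"
  assumes P: "P \<in> carrier_mat d d" and Q: "Q \<in> carrier_mat d d" and PQ: "P * Q = 1\<^sub>m d"
    and X: "X \<in> carrier_mat d d"
  shows "mtr d (Q * X * P) = mtr d X"
proof -
  have "mtr d (Q * X * P) = mtr d (P * (Q * X))" using mtr_comm[of "Q * X" d P] P Q X by auto
  also have "P * (Q * X) = X" using P Q X PQ
    by (simp add: assoc_mult_mat[of _ d d _ d _ d, symmetric] left_mult_one_mat)
  finally show ?thesis .
qed

lemma conj_P:
  fixes P Q H :: "real mat"
  assumes P: "P \<in> carrier_mat d d" and Q: "Q \<in> carrier_mat d d" and QP: "Q * P = 1\<^sub>m d"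
    and H: "H \<in> carrier_mat d d"
  shows "Q * (1\<^sub>m d - c \<cdot>\<^sub>m H) * P = 1\<^sub>m d - c \<cdot>\<^sub>m (Q * H * P)"
proof -
  have "Q * (1\<^sub>m d - c \<cdot>\<^sub>m H) = Q * 1\<^sub>m d - Q * (c \<cdot>\<^sub>m H)"
    by (rule mult_minus_distrib_mat[OF Q]) (use H in auto)
  also have "\<dots> = Q - c \<cdot>\<^sub>m (Q * H)"
    using right_mult_one_mat[OF Q] mult_smult_distrib[OF Q H] by simp
  finally have e1: "Q * (1\<^sub>m d - c \<cdot>\<^sub>m H) = Q - c \<cdot>\<^sub>m (Q * H)" .
  have "(Q - c \<cdot>\<^sub>m (Q * H)) * P = Q * P - (c \<cdot>\<^sub>m (Q * H)) * P"
    by (rule minus_mult_distrib_mat[OF Q _ P]) (use Q H in auto)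
  also have "\<dots> = Q * P - c \<cdot>\<^sub>m (Q * H * P)"
    using mult_smult_assoc_mat[of "Q * H" d d P d] Q H P by simp
  finally have e2: "(Q - c \<cdot>\<^sub>m (Q * H)) * P = Q * P - c \<cdot>\<^sub>m (Q * H * P)" .
  from e1 e2 have "Q * (1\<^sub>m d - c \<cdot>\<^sub>m H) * P = Q * P - c \<cdot>\<^sub>m (Q * H * P)" by simp
  then show ?thesis using QP by simp
qed



lemma trace_poly:
  fixes H :: "real mat" and c lam :: "nat \<Rightarrow> real"
  assumes H: "H \<in> carrier_mat d d" and Hsym: "H\<^sup>T = H"
    and cp: "char_poly H = (\<Prod>j<d. [:- lam j, 1:])"
  shows "mtr d (transpose_mat (mprod d (map (\<lambda>i. 1\<^sub>m d - c i \<cdot>\<^sub>m H) xs)) * H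
            * mprod d (map (\<lambda>i. 1\<^sub>m d - c i \<cdot>\<^sub>m H) xs) * H)
         = (\<Sum>j<d. (lam j)\<^sup>2 * (prod_list (map (\<lambda>i. 1 - c i * lam j) xs))\<^sup>2)"
proof -
  define es where "es = map lam [0..<d]"
  have "(\<Prod>e \<leftarrow> es. [:- e, 1:]) = (\<Prod>j \<leftarrow> [0..<d]. [:- lam j, 1:])" by (simp add: es_def o_def)
  also have "\<dots> = (\<Prod>j \<in> set [0..<d]. [:- lam j, 1:])" by (rule prod.distinct_set_conv_list[symmetric]) simp
  also have "\<dots> = (\<Prod>j<d. [:- lam j, 1:])" by (simp add: atLeast0LessThan)
  finally have cp': "char_poly H = (\<Prod>e \<leftarrow> es. [:- e, 1:])" using cp by simp
  obtain B P Q where sd: "schur_decomposition H es = (B, P, Q)" by (cases "schur_decomposition H es") auto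
  from schur_decomposition[OF H cp' sd]
  have sim: "similar_mat_wit H B P Q" and ut: "upper_triangular B" and dg: "diag_mat B = es" by auto
  from sim H have Bc: "B \<in> carrier_mat d d" and Pc: "P \<in> carrier_mat d d" and Qc: "Q \<in> carrier_mat d d"
    and PQ: "P * Q = 1\<^sub>m d" and QP: "Q * P = 1\<^sub>m d" and HPBQ: "H = P * B * Q"
    unfolding similar_mat_wit_def Let_def by auto
  have Bjj: "B $$ (j, j) = lam j" if j: "j < d" for j
  proof -
    have "map (\<lambda>i. B $$ (i, i)) [0..<d] = map lam [0..<d]" using dg Bc unfolding diag_mat_def es_def by simp
    then show ?thesis using j unfolding map_eq_conv by simp
  qed
  have QHP: "Q * H * P = B"
  proof -
    have "Q * H * P = (Q * P) * B * (Q * P)"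
      unfolding HPBQ using Bc Pc Qc by (simp add: assoc_mult_mat[of _ d d _ d _ d])
    then show ?thesis using QP Bc by (simp add: left_mult_one_mat right_mult_one_mat)
  qed
  define g where "g = (\<lambda>i. 1\<^sub>m d - c i \<cdot>\<^sub>m H)"
  define gB where "gB = (\<lambda>i. 1\<^sub>m d - c i \<cdot>\<^sub>m B)"
  have gc: "\<And>ys. set (map g ys) \<subseteq> carrier_mat d d" unfolding g_def using H by auto
  have Hij: "H $$ (i, j) = H $$ (j, i)" if "i < d" "j < d" for i j
    using that H by (metis Hsym carrier_matD index_transpose_mat(1))
  have gT: "transpose_mat (g i) = g i" for i
    unfolding g_def by (rule eq_matI) (use H Hij in auto)
  have Mt: "transpose_mat (mprod d (map g xs)) = mprod d (map g (rev xs))"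
    using mprod_transpose[OF gc[of xs]] gT by (simp add: rev_map o_def)
  have conj_g: "Q * mprod d (map g ys) * P = mprod d (map gB ys)" for ys
  proof -
    have "Q * mprod d (map g ys) * P = mprod d (map (\<lambda>X. Q * X * P) (map g ys))"
      by (rule conj_mprod[OF Pc Qc PQ QP gc])
    also have "map (\<lambda>X. Q * X * P) (map g ys) = map gB ys"
      unfolding g_def gB_def using conj_P[OF Pc Qc QP H] QHP by simp
    finally show ?thesis .
  qed
  have gBc: "\<And>ys. set (map gB ys) \<subseteq> carrier_mat d d" unfolding gB_def using Bc by auto
  have gBut: "upper_triangular (gB i)" for i
  proof (rule upper_triangularI)
    fix k j assume jk: "j < k" and k: "k < dim_row (gB i)"
    then have "k < d" unfolding gB_def using Bc by simp
    then show "gB i $$ (k, j) = 0" using upper_triangularD[OF ut jk] jk Bc unfolding gB_def by simp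
  qed
  have gBd: "gB i $$ (j, j) = 1 - c i * lam j" if "j < d" for i j
    using that Bc Bjj unfolding gB_def by simp
  have utl: "upper_triangular (mprod d (map gB ys)) \<and>
      (\<forall>j<d. mprod d (map gB ys) $$ (j, j) = prod_list (map (\<lambda>i. 1 - c i * lam j) ys))" for ys
  proof -
    have "upper_triangular (mprod d (map gB ys)) \<and>
      (\<forall>j<d. mprod d (map gB ys) $$ (j, j) = prod_list (map (\<lambda>U. U $$ (j, j)) (map gB ys)))"
      by (rule ut_mprod[OF gBc]) (use gBut in auto)
    moreover have "prod_list (map (\<lambda>U. U $$ (j, j)) (map gB ys)) = prod_list (map (\<lambda>i. 1 - c i * lam j) ys)"
      if "j < d" for j
    proof -
      have "map (\<lambda>U. U $$ (j, j)) (map gB ys) = map (\<lambda>i. 1 - c i * lam j) ys"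
        by (simp add: o_def gBd[OF that])
      then show ?thesis by (rule arg_cong)
    qed
    ultimately show ?thesis by (metis (no_types, lifting))
  qed
  define R where "R = mprod d (map g (rev xs))"
  define M where "M = mprod d (map g xs)"
  have Rc: "R \<in> carrier_mat d d" unfolding R_def using mprod_carrier[OF gc] .
  have Mc: "M \<in> carrier_mat d d" unfolding M_def using mprod_carrier[OF gc] .
  have X: "R * H * M * H \<in> carrier_mat d d" using Rc Mc H by (meson mult_carrier_mat)
  have "mtr d (R * H * M * H) = mtr d (Q * (R * H * M * H) * P)" using mtr_conj[OF Pc Qc PQ X] by simp
  also have "Q * (R * H * M * H) * P = (Q * R * P) * (Q * H * P) * (Q * M * P) * (Q * H * P)"
  proof -
    have RH: "R * H \<in> carrier_mat d d" using Rc H by simp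
    have RHM: "R * H * M \<in> carrier_mat d d" using RH Mc by simp
    have e1: "Q * (R * H * M * H) * P = (Q * (R * H * M) * P) * (Q * H * P)"
      by (rule conj_mult[OF Pc Qc PQ RHM H])
    have e2: "Q * (R * H * M) * P = (Q * (R * H) * P) * (Q * M * P)"
      by (rule conj_mult[OF Pc Qc PQ RH Mc])
    have e3: "Q * (R * H) * P = (Q * R * P) * (Q * H * P)"
      by (rule conj_mult[OF Pc Qc PQ Rc H])
    show ?thesis unfolding e1 e2 e3 ..
  qed
  also have "\<dots> = mprod d (map gB (rev xs)) * B * mprod d (map gB xs) * B"
    unfolding QHP R_def M_def conj_g ..
  finally have tr1: "mtr d (R * H * M * H) = mtr d (mprod d (map gB (rev xs)) * B * mprod d (map gB xs) * B)" .
  define R' where "R' = mprod d (map gB (rev xs))"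
  define M' where "M' = mprod d (map gB xs)"
  have R'c: "R' \<in> carrier_mat d d" unfolding R'_def using mprod_carrier[OF gBc] .
  have M'c: "M' \<in> carrier_mat d d" unfolding M'_def using mprod_carrier[OF gBc] .
  have u1: "upper_triangular (R' * B) \<and> (\<forall>j<d. (R' * B) $$ (j, j) = R' $$ (j, j) * B $$ (j, j))"
    by (rule ut_mult[OF R'c Bc]) (use utl ut in \<open>auto simp: R'_def\<close>)
  have u2: "upper_triangular (R' * B * M') \<and> (\<forall>j<d. (R' * B * M') $$ (j, j) = (R' * B) $$ (j, j) * M' $$ (j, j))"
    by (rule ut_mult[OF _ M'c]) (use u1 utl R'c Bc in \<open>auto simp: M'_def\<close>)
  have u3: "upper_triangular (R' * B * M' * B) \<and> (\<forall>j<d. (R' * B * M' * B) $$ (j, j) = (R' * B * M') $$ (j, j) * B $$ (j, j))"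
    by (rule ut_mult[OF _ Bc]) (use u2 ut R'c Bc M'c in auto)
  have "mtr d (R' * B * M' * B) = (\<Sum>j<d. (lam j)\<^sup>2 * (prod_list (map (\<lambda>i. 1 - c i * lam j) xs))\<^sup>2)"
    unfolding mtr_def
  proof (rule sum.cong[OF refl])
    fix j assume "j \<in> {..<d}"
    then have j: "j < d" by simp
    have "(R' * B * M' * B) $$ (j, j) = R' $$ (j, j) * B $$ (j, j) * M' $$ (j, j) * B $$ (j, j)"
      using u1 u2 u3 j by simp
    also have "\<dots> = prod_list (map (\<lambda>i. 1 - c i * lam j) xs) * lam j * prod_list (map (\<lambda>i. 1 - c i * lam j) xs) * lam j"
    proof -
      have "R' $$ (j, j) = prod_list (map (\<lambda>i. 1 - c i * lam j) (rev xs))"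
        using utl j unfolding R'_def by blast
      also have "\<dots> = prod_list (map (\<lambda>i. 1 - c i * lam j) xs)"
        by (simp only: rev_map[symmetric] prod_list.rev)
      finally show ?thesis using utl j Bjj[OF j] unfolding M'_def by simp
    qed
    finally show "(R' * B * M' * B) $$ (j, j) = (lam j)\<^sup>2 * (prod_list (map (\<lambda>i. 1 - c i * lam j) xs))\<^sup>2"
      by (simp add: power2_eq_square mult_ac)
  qed
  then show ?thesis using tr1 Mt unfolding R'_def M'_def R_def M_def g_def by simp
qed



theorem lemma5:
  fixes M :: "'a measure" and S :: "'s measure"
    and \<xi> :: "nat \<Rightarrow> 'a \<Rightarrow> 's"
    and Hs :: "'s \<Rightarrow> real mat" and bs :: "'s \<Rightarrow> real vec"
    and H :: "real mat" and b :: "real vec" and w0 :: "real vec"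
    and d T :: nat and \<eta> :: "nat \<Rightarrow> real" and \<sigma> :: real and lam :: "nat \<Rightarrow> real"
  assumes M: "prob_space M"
    and \<xi>_meas: "\<And>t. \<xi> t \<in> measurable M S"
    and \<xi>_distr: "\<And>t. distr M S (\<xi> t) = S"
    and \<xi>_indep: "prob_space.indep_vars M (\<lambda>_. S) \<xi> UNIV"
    and Hs_carrier: "\<And>s. Hs s \<in> carrier_mat d d"
    and Hs_sym: "\<And>s. (Hs s)\<^sup>T = Hs s"
    and bs_carrier: "\<And>s. bs s \<in> carrier_vec d"
    and Hs_meas: "\<And>i j. i < d \<Longrightarrow> j < d \<Longrightarrow> (\<lambda>s. Hs s $$ (i, j)) \<in> borel_measurable S"
    and bs_meas: "\<And>i. i < d \<Longrightarrow> (\<lambda>s. bs s $ i) \<in> borel_measurable S"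
    and Hs_int: "\<And>i j. i < d \<Longrightarrow> j < d \<Longrightarrow> integrable S (\<lambda>s. Hs s $$ (i, j))"
    and bs_int: "\<And>i. i < d \<Longrightarrow> integrable S (\<lambda>s. bs s $ i)"
    and H_def: "H = mat d d (\<lambda>(i, j). integral\<^sup>L S (\<lambda>s. Hs s $$ (i, j)))"
    and b_def: "b = vec d (\<lambda>i. integral\<^sup>L S (\<lambda>s. bs s $ i))"
    and H_pd: "pos_def_mat d H"
    and w0_carrier: "w0 \<in> carrier_vec d"
    and noise_int: "\<And>t i j. t \<le> T \<Longrightarrow> i < d \<Longrightarrow> j < d \<Longrightarrow>
        integrable M (\<lambda>\<omega>. noise H b w0 \<eta> Hs bs \<xi> t \<omega> $ i * noise H b w0 \<eta> Hs bs \<xi> t \<omega> $ j)"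
    and noise_cov: "\<And>t. t \<le> T \<Longrightarrow> loewner_le d
        (mat d d (\<lambda>(i, j). integral\<^sup>L M
            (\<lambda>\<omega>. noise H b w0 \<eta> Hs bs \<xi> t \<omega> $ i * noise H b w0 \<eta> Hs bs \<xi> t \<omega> $ j)))
        (\<sigma>\<^sup>2 \<cdot>\<^sub>m H)"
    and eigenvalues: "char_poly H = (\<Prod>j<d. [:- lam j, 1:])"
  shows "(\<Sum>\<tau>\<le>T. integral\<^sup>L M (\<lambda>\<omega>. (\<eta> \<tau>)\<^sup>2 *
            (noise H b w0 \<eta> Hs bs \<xi> \<tau> \<omega> \<bullet>
              ((mprod d (map (Pmat d H \<eta>) (rev [Suc \<tau>..<Suc T])) * H
                  * mprod d (map (Pmat d H \<eta>) [Suc \<tau>..<Suc T]))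
                *\<^sub>v noise H b w0 \<eta> Hs bs \<xi> \<tau> \<omega>))))
    \<le> \<sigma>\<^sup>2 * (\<Sum>j<d. (lam j)\<^sup>2 *
          (\<Sum>k\<le>T. (\<eta> k)\<^sup>2 * (\<Prod>i\<in>{Suc k..T}. (1 - \<eta> i * lam j)\<^sup>2)))"
proof -
  have Hc: "H \<in> carrier_mat d d" and Hsym: "H\<^sup>T = H" using H_pd unfolding pos_def_mat_def by auto
  have Hpos: "x \<bullet> (H *\<^sub>v x) \<ge> 0" if x: "x \<in> carrier_vec d" for x
  proof (cases "x = 0\<^sub>v d")
    case True then show ?thesis using Hc by simp
  next
    case False then show ?thesis using H_pd x unfolding pos_def_mat_def by (meson less_imp_le)
  qed
  have Hij: "H $$ (i, j) = H $$ (j, i)" if "i < d" "j < d" for i j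
    using that Hc by (metis Hsym carrier_matD index_transpose_mat(1))
  have Pm: "Pmat d H \<eta> = (\<lambda>i. 1\<^sub>m d - \<eta> i \<cdot>\<^sub>m H)" unfolding Pmat_def by (rule ext) simp
  have Pc: "set (map (Pmat d H \<eta>) ys) \<subseteq> carrier_mat d d" for ys unfolding Pm using Hc by auto
  have PT: "transpose_mat (Pmat d H \<eta> i) = Pmat d H \<eta> i" for i
    unfolding Pm by (rule eq_matI) (use Hc Hij in auto)
  define N where "N = noise H b w0 \<eta> Hs bs \<xi>"
  have Nc: "N t \<omega> \<in> carrier_vec d" for t \<omega>
  proof (rule carrier_vecI)
    show "dim_vec (N t \<omega>) = d"
      unfolding N_def noise_def using carrier_vecD[OF bs_carrier[of "\<xi> t \<omega>"]]
      by (simp only: index_minus_vec(2))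
  qed
  define RHS where "RHS = (\<lambda>\<tau>. (\<eta> \<tau>)\<^sup>2 * (\<sigma>\<^sup>2 * (\<Sum>j<d. (lam j)\<^sup>2 * (\<Prod>i\<in>{Suc \<tau>..T}. (1 - \<eta> i * lam j)\<^sup>2))))"
  have key: "integral\<^sup>L M (\<lambda>\<omega>. (\<eta> \<tau>)\<^sup>2 *
            (N \<tau> \<omega> \<bullet> ((mprod d (map (Pmat d H \<eta>) (rev [Suc \<tau>..<Suc T])) * H
                  * mprod d (map (Pmat d H \<eta>) [Suc \<tau>..<Suc T])) *\<^sub>v N \<tau> \<omega>))) \<le> RHS \<tau>"
    if \<tau>T: "\<tau> \<le> T" for \<tau>
  proof -
    define L where "L = [Suc \<tau>..<Suc T]"
    define MM where "MM = mprod d (map (Pmat d H \<eta>) L)"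
    define A where "A = mprod d (map (Pmat d H \<eta>) (rev L)) * H * MM"
    have MMc: "MM \<in> carrier_mat d d" unfolding MM_def using mprod_carrier[OF Pc] .
    have MMt: "transpose_mat MM = mprod d (map (Pmat d H \<eta>) (rev L))"
      unfolding MM_def using mprod_transpose[OF Pc[of L]] PT by (simp add: rev_map o_def)
    have A': "A = transpose_mat MM * H * MM" unfolding A_def MMt ..
    have MMtc: "transpose_mat MM \<in> carrier_mat d d" using MMc by simp
    have Ac: "A \<in> carrier_mat d d" unfolding A' using MMc Hc by simp
    have AT: "transpose_mat A = A"
    proof -
      have "transpose_mat A = transpose_mat MM * transpose_mat (transpose_mat MM * H)"
        unfolding A' by (rule transpose_mult) (use MMc Hc in auto)
      also have "transpose_mat (transpose_mat MM * H) = transpose_mat H * MM"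
        using transpose_mult[OF MMtc Hc] by simp
      finally show ?thesis unfolding A' Hsym using MMc Hc by (simp add: assoc_mult_mat[of _ d d _ d _ d])
    qed
    have Asym: "A $$ (i, j) = A $$ (j, i)" if "i < d" "j < d" for i j
      using that Ac by (metis AT carrier_matD index_transpose_mat(1))
    have Apsd: "qf d (\<lambda>i j. A $$ (i, j)) x x \<ge> 0" for x
    proof -
      define v where "v = vec d x"
      have vc: "v \<in> carrier_vec d" unfolding v_def by simp
      have "qf d (\<lambda>i j. A $$ (i, j)) x x = v \<bullet> (A *\<^sub>v v)"
        by (subst quad_form[OF vc Ac]) (auto simp: qf_def v_def intro!: sum.cong)
      also have "A *\<^sub>v v = transpose_mat MM *\<^sub>v (H *\<^sub>v (MM *\<^sub>v v))"
        unfolding A' using MMc Hc vc by (simp add: assoc_mult_mat_vec[of _ d d _ d])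
      also have "v \<bullet> (transpose_mat MM *\<^sub>v (H *\<^sub>v (MM *\<^sub>v v))) = (MM *\<^sub>v v) \<bullet> (H *\<^sub>v (MM *\<^sub>v v))"
      proof -
        have y: "H *\<^sub>v (MM *\<^sub>v v) \<in> carrier_vec d" using Hc MMc vc by simp
        have "v \<bullet> (transpose_mat MM *\<^sub>v (H *\<^sub>v (MM *\<^sub>v v))) = (transpose_mat MM *\<^sub>v (H *\<^sub>v (MM *\<^sub>v v))) \<bullet> v"
          by (rule comm_scalar_prod[OF vc]) (use MMc y in simp)
        also have "\<dots> = (H *\<^sub>v (MM *\<^sub>v v)) \<bullet> (MM *\<^sub>v v)"
          by (rule transpose_vec_mult_scalar[OF MMc vc y])
        also have "\<dots> = (MM *\<^sub>v v) \<bullet> (H *\<^sub>v (MM *\<^sub>v v))"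
          by (rule comm_scalar_prod[OF y]) (use MMc vc in simp)
        finally show ?thesis .
      qed
      finally show ?thesis using Hpos[of "MM *\<^sub>v v"] MMc vc by simp
    qed
    define C where "C = (\<lambda>i j. integral\<^sup>L M (\<lambda>\<omega>. N \<tau> \<omega> $ i * N \<tau> \<omega> $ j))"
    define D where "D = (\<lambda>i j. \<sigma>\<^sup>2 * H $$ (i, j) - C i j)"
    have Dpsd: "qf d D x x \<ge> 0" for x
    proof -
      define v where "v = vec d x"
      have vc: "v \<in> carrier_vec d" unfolding v_def by simp
      define Cm where "Cm = mat d d (\<lambda>(i, j). C i j)"
      have lw: "loewner_le d Cm (\<sigma>\<^sup>2 \<cdot>\<^sub>m H)" using noise_cov[OF \<tau>T] unfolding Cm_def C_def N_def .
      have Dc: "\<sigma>\<^sup>2 \<cdot>\<^sub>m H - Cm \<in> carrier_mat d d" 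
        by (rule carrier_matI) (simp_all add: Cm_def)
      have "0 \<le> v \<bullet> ((\<sigma>\<^sup>2 \<cdot>\<^sub>m H - Cm) *\<^sub>v v)" using lw vc unfolding loewner_le_def by blast
      also have "\<dots> = qf d D x x"
        by (subst quad_form[OF vc Dc]) (use Hc in \<open>auto simp: qf_def D_def v_def Cm_def intro!: sum.cong\<close>)
      finally show ?thesis .
    qed
    have integrand: "(\<eta> \<tau>)\<^sup>2 * (N \<tau> \<omega> \<bullet> (A *\<^sub>v N \<tau> \<omega>))
        = (\<Sum>i<d. \<Sum>j<d. ((\<eta> \<tau>)\<^sup>2 * A $$ (i, j)) * (N \<tau> \<omega> $ i * N \<tau> \<omega> $ j))" for \<omega>
      unfolding quad_form[OF Nc Ac] by (simp add: sum_distrib_left mult_ac)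
    have intg: "integral\<^sup>L M (\<lambda>\<omega>. (\<eta> \<tau>)\<^sup>2 * (N \<tau> \<omega> \<bullet> (A *\<^sub>v N \<tau> \<omega>)))
        = (\<Sum>i<d. \<Sum>j<d. ((\<eta> \<tau>)\<^sup>2 * A $$ (i, j)) * C i j)"
    proof -
      have ig: "integrable M (\<lambda>\<omega>. N \<tau> \<omega> $ i * N \<tau> \<omega> $ j)" if "i < d" "j < d" for i j
        using noise_int[OF \<tau>T that] unfolding N_def .
      have "integral\<^sup>L M (\<lambda>\<omega>. (\<Sum>i<d. \<Sum>j<d. ((\<eta> \<tau>)\<^sup>2 * A $$ (i, j)) * (N \<tau> \<omega> $ i * N \<tau> \<omega> $ j)))
          = (\<Sum>i<d. integral\<^sup>L M (\<lambda>\<omega>. \<Sum>j<d. ((\<eta> \<tau>)\<^sup>2 * A $$ (i, j)) * (N \<tau> \<omega> $ i * N \<tau> \<omega> $ j)))"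
        by (rule Bochner_Integration.integral_sum) (auto intro!: Bochner_Integration.integrable_sum integrable_mult_right ig)
      also have "\<dots> = (\<Sum>i<d. \<Sum>j<d. integral\<^sup>L M (\<lambda>\<omega>. ((\<eta> \<tau>)\<^sup>2 * A $$ (i, j)) * (N \<tau> \<omega> $ i * N \<tau> \<omega> $ j)))"
        by (intro sum.cong refl Bochner_Integration.integral_sum) (auto intro!: integrable_mult_right ig)
      also have "\<dots> = (\<Sum>i<d. \<Sum>j<d. ((\<eta> \<tau>)\<^sup>2 * A $$ (i, j)) * C i j)"
        unfolding C_def by (simp only: integral_mult_right_zero)
      finally show ?thesis unfolding integrand .
    qed
    have "(\<Sum>i<d. \<Sum>j<d. ((\<eta> \<tau>)\<^sup>2 * A $$ (i, j)) * C i j)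
        = (\<eta> \<tau>)\<^sup>2 * (\<sigma>\<^sup>2 * (\<Sum>i<d. \<Sum>j<d. A $$ (i, j) * H $$ (i, j)) - (\<Sum>i<d. \<Sum>j<d. A $$ (i, j) * D i j))"
      unfolding D_def by (simp add: algebra_simps sum_distrib_left sum_subtractf)
    also have "\<dots> \<le> (\<eta> \<tau>)\<^sup>2 * (\<sigma>\<^sup>2 * (\<Sum>i<d. \<Sum>j<d. A $$ (i, j) * H $$ (i, j)))"
      using psd_trace[of d D "\<lambda>i j. A $$ (i, j)"] Dpsd Asym Apsd by (simp add: mult_left_mono)
    also have "(\<Sum>i<d. \<Sum>j<d. A $$ (i, j) * H $$ (i, j)) = mtr d (A * H)"
      unfolding mtr_def using mult_entry[OF Ac Hc] Hij by (intro sum.cong refl) simp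
    also have "mtr d (A * H) = (\<Sum>j<d. (lam j)\<^sup>2 * (prod_list (map (\<lambda>i. 1 - \<eta> i * lam j) L))\<^sup>2)"
      unfolding A' MM_def Pm by (rule trace_poly[OF Hc Hsym eigenvalues])
    also have "\<dots> = (\<Sum>j<d. (lam j)\<^sup>2 * (\<Prod>i\<in>{Suc \<tau>..T}. (1 - \<eta> i * lam j)\<^sup>2))"
    proof (intro sum.cong refl arg_cong2[where f = "(*)"])
      fix j
      have "prod_list (map (\<lambda>i. 1 - \<eta> i * lam j) L) = (\<Prod>i\<in>set L. 1 - \<eta> i * lam j)"
        by (rule prod.distinct_set_conv_list[symmetric]) (simp add: L_def)
      also have "set L = {Suc \<tau>..T}" unfolding L_def by auto
      finally show "(prod_list (map (\<lambda>i. 1 - \<eta> i * lam j) L))\<^sup>2 = (\<Prod>i\<in>{Suc \<tau>..T}. (1 - \<eta> i * lam j)\<^sup>2)"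
        by (simp add: prod_power_distrib)
    qed
    finally show ?thesis using intg unfolding RHS_def A_def L_def MM_def by simp
  qed
  have "(\<Sum>\<tau>\<le>T. integral\<^sup>L M (\<lambda>\<omega>. (\<eta> \<tau>)\<^sup>2 *
            (N \<tau> \<omega> \<bullet> ((mprod d (map (Pmat d H \<eta>) (rev [Suc \<tau>..<Suc T])) * H
                  * mprod d (map (Pmat d H \<eta>) [Suc \<tau>..<Suc T])) *\<^sub>v N \<tau> \<omega>))))
        \<le> (\<Sum>\<tau>\<le>T. RHS \<tau>)"
    by (rule sum_mono) (use key in simp)
  also have "(\<Sum>\<tau>\<le>T. RHS \<tau>) = \<sigma>\<^sup>2 * (\<Sum>j<d. (lam j)\<^sup>2 *
          (\<Sum>k\<le>T. (\<eta> k)\<^sup>2 * (\<Prod>i\<in>{Suc k..T}. (1 - \<eta> i * lam j)\<^sup>2)))"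
    unfolding RHS_def sum_distrib_left
    by (subst sum.swap) (simp add: mult_ac)
  finally show ?thesis unfolding N_def .
qed

end
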